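(* Fix $q\in V(G)$ and let $D\in\operatorname{Div}(G)$. Then $D$ is $q$-reduced if and only if $D\in|D|_q$ and $\mathcal{E}_q(D)<\mathcal{E}_q(D')$ for every $D'\in|D|_q$ with $D'\ne D$.
   Context: $G$ is a finite connected multigraph without loop edges, with vertex set $V(G)$ and edge set $E(G)$. A divisor is an element $D=\sum_{v}D(v)(v)$ of the free abelian group $\operatorname{Div}(G)$ on $V(G)$; $\deg(D)=\sum_vD(v)$. The Laplacian $\Delta$ sends a function $f:V(G)\to\mathbb{Q}$ to $\Delta(f)=\sum_v\Delta_v(f)(v)$ with $\Delta_v(f)=\sum_{\{v,w\}\in E(G)}(f(v)-f(w))$ (edges counted with multiplicity). $D_1\sim D_2$ means $D_1-D_2=\Delta(f)$ for some integer-valued $f$. For $q\in V(G)$, $|D|_q=\{E\in\operatorname{Div}(G): E\sim D,\ E(v)\ge 0\text{ for all }v\ne q\}$. For $A\subseteq V(G)$ and $v\in A$, $\operatorname{outdeg}_A(v)$ is the number of edges joining $v$ to $V(G)\setminus A$. A divisor $D$ is $q$-reduced if (i) $D(v)\ge 0$ for all $v\ne q$, and (ii) for every non-empty $A\subseteq V(G)\setminus\{q\}$ there is $v\in A$ with $D(v)<\operatorname{outdeg}_A(v)$. $Q$ is the Laplacian matrix with respect to a labeling of $V(G)$. For degree-zero divisors $D_1,D_2$, the energy pairing is $\langle D_1,D_2\rangle=[D_1]^TL[D_2]$ for any generalized inverse $L$ of $Q$ ($QLQ=Q$), independent of $L$. For divisors $D,E$, $\langle D,E\rangle_q=\langle D-\deg(D)(q),\,E-\deg(E)(q)\rangle$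 and $\mathcal{E}_q(D)=\langle D,D\rangle_q$. *)

theory Defs
  imports Complex_Main
begin

text \<open>A finite multigraph on the vertex type 'v (V(G) = UNIV), given by an edge
multiplicity function m: m v w = number of edges joining v and w.\<close>

definition multigraph :: "('v::finite \<Rightarrow> 'v \<Rightarrow> nat) \<Rightarrow> bool" where
  "multigraph m \<longleftrightarrow> (\<forall>v w. m v w = m w v) \<and> (\<forall>v. m v v = 0)"

definition connected_mg :: "('v::finite \<Rightarrow> 'v \<Rightarrow> nat) \<Rightarrow> bool" where
  "connected_mg m \<longleftrightarrow> (\<forall>u w. (u, w) \<in> {(a, b). 0 < m a b}\<^sup>*)"

type_synonym 'v divisor = "'v \<Rightarrow> int"

definition deg :: "'v::finite divisor \<Rightarrow> int" where
  "deg D = (\<Sum>v\<in>UNIV. D v)"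

definition laplacian :: "('v::finite \<Rightarrow> 'v \<Rightarrow> nat) \<Rightarrow> ('v \<Rightarrow> int) \<Rightarrow> 'v divisor" where
  "laplacian m f = (\<lambda>v. \<Sum>w\<in>UNIV. int (m v w) * (f v - f w))"

definition lin_equiv :: "('v::finite \<Rightarrow> 'v \<Rightarrow> nat) \<Rightarrow> 'v divisor \<Rightarrow> 'v divisor \<Rightarrow> bool" where
  "lin_equiv m D1 D2 \<longleftrightarrow> (\<exists>f::'v \<Rightarrow> int. (\<lambda>v. D1 v - D2 v) = laplacian m f)"

definition lin_system_q :: "('v::finite \<Rightarrow> 'v \<Rightarrow> nat) \<Rightarrow> 'v \<Rightarrow> 'v divisor \<Rightarrow> 'v divisor set" where
  "lin_system_q m q D = {E. lin_equiv m E D \<and> (\<forall>v. v \<noteq> q \<longrightarrow> 0 \<le> E v)}"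

definition outdeg :: "('v::finite \<Rightarrow> 'v \<Rightarrow> nat) \<Rightarrow> 'v set \<Rightarrow> 'v \<Rightarrow> nat" where
  "outdeg m A v = (\<Sum>w\<in>UNIV - A. m v w)"

definition q_reduced :: "('v::finite \<Rightarrow> 'v \<Rightarrow> nat) \<Rightarrow> 'v \<Rightarrow> 'v divisor \<Rightarrow> bool" where
  "q_reduced m q D \<longleftrightarrow> (\<forall>v. v \<noteq> q \<longrightarrow> 0 \<le> D v) \<and>
     (\<forall>A. A \<noteq> {} \<and> A \<subseteq> UNIV - {q} \<longrightarrow> (\<exists>v\<in>A. D v < int (outdeg m A v)))"

definition lap_matrix :: "('v::finite \<Rightarrow> 'v \<Rightarrow> nat) \<Rightarrow> 'v \<Rightarrow> 'v \<Rightarrow> rat" where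
  "lap_matrix m i j = (if i = j then of_nat (\<Sum>w\<in>UNIV. m i w) else - of_nat (m i j))"

definition gen_inverse :: "('v::finite \<Rightarrow> 'v \<Rightarrow> rat) \<Rightarrow> ('v \<Rightarrow> 'v \<Rightarrow> rat) \<Rightarrow> bool" where
  "gen_inverse Q L \<longleftrightarrow> (\<forall>i j. (\<Sum>k\<in>UNIV. \<Sum>l\<in>UNIV. Q i k * L k l * Q l j) = Q i j)"

definition energy_pairing :: "('v::finite \<Rightarrow> 'v \<Rightarrow> nat) \<Rightarrow> 'v divisor \<Rightarrow> 'v divisor \<Rightarrow> rat" where
  "energy_pairing m D1 D2 =
     (let L = (SOME L. gen_inverse (lap_matrix m) L)
      in \<Sum>i\<in>UNIV. \<Sum>j\<in>UNIV. of_int (D1 i) * L i j * of_int (D2 j))"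

definition shift_q :: "'v::finite \<Rightarrow> 'v divisor \<Rightarrow> 'v divisor" where
  "shift_q q D = (\<lambda>v. D v - (if v = q then deg D else 0))"

definition pairing_q :: "('v::finite \<Rightarrow> 'v \<Rightarrow> nat) \<Rightarrow> 'v \<Rightarrow> 'v divisor \<Rightarrow> 'v divisor \<Rightarrow> rat" where
  "pairing_q m q D E = energy_pairing m (shift_q q D) (shift_q q E)"

definition energy_q :: "('v::finite \<Rightarrow> 'v \<Rightarrow> nat) \<Rightarrow> 'v \<Rightarrow> 'v divisor \<Rightarrow> rat" where
  "energy_q m q D = pairing_q m q D D"

end

theory Submission imports Defs "HOL-Analysis.Cartesian_Space" begin

definition mvq :: "('v::finite \<Rightarrow> 'v \<Rightarrow> nat) \<Rightarrow> ('v \<Rightarrow> rat) \<Rightarrow> 'v \<Rightarrow> rat" where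
  "mvq m g i = (\<Sum>k\<in>UNIV. lap_matrix m i k * g k)"

lemma mvq_alt:
  assumes "multigraph m"
  shows "mvq m g i = (\<Sum>w\<in>UNIV. of_nat (m i w) * (g i - g w))"
proof -
  have mii: "m i i = 0" using assms by (simp add: multigraph_def)
  have "\<And>k. lap_matrix m i k * g k = (if k = i then of_nat (\<Sum>w\<in>UNIV. m i w) * g i else 0) - of_nat (m i k) * g k"
    using mii by (auto simp: lap_matrix_def)
  hence "mvq m g i = of_nat (\<Sum>w\<in>UNIV. m i w) * g i - (\<Sum>k\<in>UNIV. of_nat (m i k) * g k)"
    unfolding mvq_def by (simp add: sum_subtractf)
  also have "\<dots> = (\<Sum>w\<in>UNIV. of_nat (m i w) * (g i - g w))"
    by (simp add: right_diff_distrib sum_subtractf sum_distrib_right)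
  finally show ?thesis .
qed

lemma lap_sym: "multigraph m \<Longrightarrow> lap_matrix m i j = lap_matrix m j i"
  by (auto simp: lap_matrix_def multigraph_def)

lemma mvq_symm:
  assumes "multigraph m"
  shows "(\<Sum>i\<in>UNIV. f i * mvq m g i) = (\<Sum>i\<in>UNIV. mvq m f i * g i)"
proof -
  have "(\<Sum>i\<in>UNIV. f i * mvq m g i) = (\<Sum>i\<in>UNIV. \<Sum>k\<in>UNIV. f i * lap_matrix m i k * g k)"
    by (simp add: mvq_def sum_distrib_left mult.assoc)
  also have "\<dots> = (\<Sum>k\<in>UNIV. \<Sum>i\<in>UNIV. f i * lap_matrix m i k * g k)"
    by (rule sum.swap)
  also have "\<dots> = (\<Sum>k\<in>UNIV. mvq m f k * g k)"
    by (simp add: mvq_def sum_distrib_left sum_distrib_right lap_sym[OF assms] ac_simps)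
  finally show ?thesis .
qed

lemma mvq_sum0:
  assumes "multigraph m"
  shows "(\<Sum>i\<in>UNIV. mvq m g i) = 0"
proof -
  have "(\<Sum>i\<in>UNIV. mvq m g i) = (\<Sum>i\<in>UNIV. (\<lambda>_. 1) i * mvq m g i)" by simp
  also have "\<dots> = (\<Sum>i\<in>UNIV. mvq m (\<lambda>_. 1) i * g i)" by (rule mvq_symm[OF assms])
  also have "\<dots> = 0" by (simp add: mvq_alt[OF assms])
  finally show ?thesis .
qed

lemma mvq_quad:
  assumes "multigraph m"
  shows "2 * (\<Sum>i\<in>UNIV. g i * mvq m g i) = (\<Sum>i\<in>UNIV. \<Sum>w\<in>UNIV. of_nat (m i w) * (g i - g w)^2)"
proof -
  have e1: "(\<Sum>i\<in>UNIV. g i * mvq m g i) = (\<Sum>i\<in>UNIV. \<Sum>w\<in>UNIV. of_nat (m i w) * (g i - g w) * g i)"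
    by (simp add: mvq_alt[OF assms] sum_distrib_left sum_distrib_right mult.commute mult.left_commute)
  have "(\<Sum>i\<in>UNIV. \<Sum>w\<in>UNIV. of_nat (m i w) * (g i - g w) * g i) = (\<Sum>w\<in>UNIV. \<Sum>i\<in>UNIV. of_nat (m i w) * (g i - g w) * g i)"
    by (rule sum.swap)
  also have "\<dots> = (\<Sum>i\<in>UNIV. \<Sum>w\<in>UNIV. of_nat (m i w) * (g w - g i) * g w)"
  proof -
    have "\<And>i w. m i w = m w i"
      using assms by (simp add: multigraph_def)
    hence "(\<Sum>i\<in>UNIV. \<Sum>w\<in>UNIV. of_nat (m i w) * (g w - g i) * g w) = (\<Sum>i\<in>UNIV. \<Sum>w\<in>UNIV. of_nat (m w i) * (g w - g i) * (g w::rat))"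
      by simp
    thus ?thesis by simp
  qed
  finally have e2: "(\<Sum>i\<in>UNIV. g i * mvq m g i) = (\<Sum>i\<in>UNIV. \<Sum>w\<in>UNIV. - (of_nat (m i w) * (g i - g w) * g w))"
    using e1 by (simp add: algebra_simps)
  have "2 * (\<Sum>i\<in>UNIV. g i * mvq m g i) = (\<Sum>i\<in>UNIV. g i * mvq m g i) + (\<Sum>i\<in>UNIV. g i * mvq m g i)" by simp
  also have "\<dots> = (\<Sum>i\<in>UNIV. \<Sum>w\<in>UNIV. of_nat (m i w) * (g i - g w) * g i + - (of_nat (m i w) * (g i - g w) * g w))"
    by (subst e1, subst e2, simp only: sum.distrib[symmetric])
  also have "\<dots> = (\<Sum>i\<in>UNIV. \<Sum>w\<in>UNIV. of_nat (m i w) * (g i - g w)^2)"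
    by (simp add: power2_eq_square algebra_simps)
  finally show ?thesis .
qed

lemma mvq_nonneg:
  assumes "multigraph m"
  shows "0 \<le> (\<Sum>i\<in>UNIV. g i * mvq m g i)"
proof -
  have "0 \<le> (\<Sum>i\<in>UNIV. \<Sum>w\<in>UNIV. of_nat (m i w) * (g i - g w)^2 :: rat)"
    by (intro sum_nonneg) auto
  thus ?thesis using mvq_quad[OF assms, of g] by linarith
qed

lemma conn_const:
  assumes "connected_mg m" and "\<And>i w. 0 < m i w \<Longrightarrow> g i = g w"
  shows "g u = g w"
proof -
  have "(u, w) \<in> {(a, b). 0 < m a b}\<^sup>*" using assms(1) by (simp add: connected_mg_def)
  thus ?thesis
    by (induction rule: rtrancl_induct) (auto dest: assms(2))
qed

lemma mvq_kernel:
  assumes "multigraph m" "connected_mg m" "\<And>i. mvq m g i = 0"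
  shows "g u = g w"
proof (rule conn_const[OF assms(2)])
  fix i w assume mi: "0 < m i w"
  have "(\<Sum>i\<in>UNIV. \<Sum>w\<in>UNIV. of_nat (m i w) * (g i - g w)^2 :: rat) = 0"
    using mvq_quad[OF assms(1), of g] assms(3) by simp
  hence "(\<Sum>w\<in>UNIV. of_nat (m i w) * (g i - g w)^2 :: rat) = 0"
    by (subst (asm) sum_nonneg_eq_0_iff) (auto intro: sum_nonneg)
  hence "of_nat (m i w) * (g i - g w)^2 = (0::rat)"
    by (subst (asm) sum_nonneg_eq_0_iff) auto
  thus "g i = g w" using mi by simp
qed

lemma mvq_surj:
  fixes b :: "'v::finite \<Rightarrow> rat"
  assumes mg: "multigraph m" and cn: "connected_mg m" and b0: "(\<Sum>i\<in>UNIV. b i) = 0"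
  shows "\<exists>g. mvq m g = b"
proof -
  define A :: "rat^'v^'v" where
    "A = (\<chi> i j. if i = q then (if j = q then 1 else 0) else lap_matrix m i j)"
  have Av: "(A *v x) $ i = (if i = q then x $ q else mvq m (vec_nth x) i)" for x i
  proof (cases "i = q")
    case True
    have "(\<Sum>j\<in>UNIV. (if j = q then 1 else 0) * x $ j) = x $ q"
    proof -
      have "\<And>j. (if j = q then 1 else 0) * x $ j = (if j = q then x $ q else 0)" by simp
      thus ?thesis by simp
    qed
    thus ?thesis using True by (simp add: A_def matrix_vector_mult_def)
  qed (simp add: A_def matrix_vector_mult_def mvq_def)
  have inj0: "x = 0" if "A *v x = 0" for x
  proof -
    have xq: "x $ q = 0" using Av[of x q] that by simp
    have o: "mvq m (vec_nth x) i = 0" if "i \<noteq> q" for i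
      using Av[of x i] \<open>A *v x = 0\<close> that by simp
    have "(\<Sum>i\<in>UNIV. mvq m (vec_nth x) i) = mvq m (vec_nth x) q + (\<Sum>i\<in>UNIV - {q}. mvq m (vec_nth x) i)"
      by (simp add: sum.remove)
    hence "mvq m (vec_nth x) q = 0" using mvq_sum0[OF mg] o by simp
    hence "\<And>i. mvq m (vec_nth x) i = 0" using o by metis
    hence "\<And>u. x $ u = x $ q" using mvq_kernel[OF mg cn] by blast
    thus ?thesis using xq by (simp add: vec_eq_iff)
  qed
  have "inj ((*v) A)"
  proof (rule injI)
    fix x y assume "A *v x = A *v y"
    hence "A *v (x - y) = 0" by (simp add: matrix_vector_mult_diff_distrib)
    hence "x - y = 0" by (rule inj0)
    thus "x = y" by simp
  qed
  hence "surj ((*v) A)"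
    by (rule vec.linear_inj_imp_surj[OF matrix_vector_mul_linear_gen])
  then obtain x where x: "A *v x = (\<chi> i. if i = q then 0 else b i)"
    by (metis surjD)
  have o: "mvq m (vec_nth x) i = b i" if "i \<noteq> q" for i
    using arg_cong[OF x, of "\<lambda>v. v $ i"] Av[of x i] that by simp
  have "(\<Sum>i\<in>UNIV. mvq m (vec_nth x) i) = mvq m (vec_nth x) q + (\<Sum>i\<in>UNIV - {q}. mvq m (vec_nth x) i)"
    by (simp add: sum.remove)
  moreover have "(\<Sum>i\<in>UNIV. b i) = b q + (\<Sum>i\<in>UNIV - {q}. b i)"
    by (simp add: sum.remove)
  moreover have "(\<Sum>i\<in>UNIV - {q}. mvq m (vec_nth x) i) = (\<Sum>i\<in>UNIV - {q}. b i)"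
    using o by (intro sum.cong) auto
  ultimately have "mvq m (vec_nth x) q = b q" using mvq_sum0[OF mg] b0 by simp
  hence "mvq m (vec_nth x) = b" using o by (metis ext)
  thus ?thesis by blast
qed


lemma sum4_swap:
  "(\<Sum>i\<in>A. \<Sum>j\<in>B. \<Sum>k\<in>C. \<Sum>l\<in>D. f i j k l) = (\<Sum>k\<in>C. \<Sum>l\<in>D. \<Sum>i\<in>A. \<Sum>j\<in>B. f i j k l)"
proof -
  have "(\<Sum>i\<in>A. \<Sum>j\<in>B. \<Sum>k\<in>C. \<Sum>l\<in>D. f i j k l) = (\<Sum>i\<in>A. \<Sum>k\<in>C. \<Sum>j\<in>B. \<Sum>l\<in>D. f i j k l)"
    by (rule sum.cong[OF refl], rule sum.swap)
  also have "\<dots> = (\<Sum>k\<in>C. \<Sum>i\<in>A. \<Sum>j\<in>B. \<Sum>l\<in>D. f i j k l)"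
    by (rule sum.swap)
  also have "\<dots> = (\<Sum>k\<in>C. \<Sum>i\<in>A. \<Sum>l\<in>D. \<Sum>j\<in>B. f i j k l)"
    by (rule sum.cong[OF refl], rule sum.cong[OF refl], rule sum.swap)
  also have "\<dots> = (\<Sum>k\<in>C. \<Sum>l\<in>D. \<Sum>i\<in>A. \<Sum>j\<in>B. f i j k l)"
    by (rule sum.cong[OF refl], rule sum.swap)
  finally show ?thesis .
qed

lemma bilinear:
  assumes mg: "multigraph m" and L: "gen_inverse (lap_matrix m) L"
  shows "(\<Sum>i\<in>UNIV. \<Sum>j\<in>UNIV. mvq m g i * L i j * mvq m h j) = (\<Sum>k\<in>UNIV. g k * mvq m h k)"
proof -
  let ?Q = "lap_matrix m"
  have mg': "\<And>i. mvq m g i = (\<Sum>k\<in>UNIV. g k * ?Q k i)"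
    by (simp add: mvq_def lap_sym[OF mg] mult.commute)
  have "(\<Sum>i\<in>UNIV. \<Sum>j\<in>UNIV. mvq m g i * L i j * mvq m h j)
      = (\<Sum>i\<in>UNIV. \<Sum>j\<in>UNIV. \<Sum>k\<in>UNIV. \<Sum>l\<in>UNIV. g k * h l * (?Q k i * L i j * ?Q j l))"
    unfolding mg' by (simp add: mvq_def sum_distrib_left sum_distrib_right ac_simps)
  also have "\<dots> = (\<Sum>k\<in>UNIV. \<Sum>l\<in>UNIV. \<Sum>i\<in>UNIV. \<Sum>j\<in>UNIV. g k * h l * (?Q k i * L i j * ?Q j l))"
    by (rule sum4_swap)
  also have "\<dots> = (\<Sum>k\<in>UNIV. \<Sum>l\<in>UNIV. g k * h l * ?Q k l)"
    using L by (simp add: gen_inverse_def sum_distrib_left[symmetric])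
  also have "\<dots> = (\<Sum>k\<in>UNIV. g k * mvq m h k)"
    by (simp add: mvq_def sum_distrib_left ac_simps)
  finally show ?thesis .
qed

lemma gen_inverse_exists:
  assumes mg: "multigraph m" and cn: "connected_mg m"
  shows "\<exists>L. gen_inverse (lap_matrix m) (L :: 'v::finite \<Rightarrow> 'v \<Rightarrow> rat)"
proof -
  fix q :: 'v
  define e where "e l = (\<lambda>i::'v. (if i = l then 1 else 0) - (if i = q then 1 else (0::rat)))" for l
  have e0: "(\<Sum>i\<in>UNIV. e l i) = 0" for l
    by (simp add: e_def sum_subtractf)
  define gs where "gs l = (SOME g. mvq m g = e l)" for l
  have gs: "mvq m (gs l) = e l" for l
    unfolding gs_def by (rule someI_ex[OF mvq_surj[OF mg cn e0]])
  define L where "L k l = gs l k" for k l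
  have cs: "(\<Sum>l\<in>UNIV. lap_matrix m l j) = 0" for j
  proof -
    have "(\<Sum>l\<in>UNIV. lap_matrix m l j) = mvq m (\<lambda>_. 1) j"
      by (simp add: mvq_def lap_sym[OF mg])
    thus ?thesis by (simp add: mvq_alt[OF mg])
  qed
  have "gen_inverse (lap_matrix m) L"
    unfolding gen_inverse_def
  proof (intro allI)
    fix i j
    have "(\<Sum>k\<in>UNIV. \<Sum>l\<in>UNIV. lap_matrix m i k * L k l * lap_matrix m l j)
        = (\<Sum>l\<in>UNIV. \<Sum>k\<in>UNIV. lap_matrix m i k * L k l * lap_matrix m l j)"
      by (rule sum.swap)
    also have "\<dots> = (\<Sum>l\<in>UNIV. mvq m (gs l) i * lap_matrix m l j)"
      by (simp add: mvq_def L_def sum_distrib_right)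
    also have "\<dots> = (\<Sum>l\<in>UNIV. e l i * lap_matrix m l j)"
      by (simp add: gs)
    also have "\<dots> = (\<Sum>l\<in>UNIV. (if l = i then lap_matrix m i j else 0) - (if i = q then lap_matrix m l j else 0))"
      by (intro sum.cong) (auto simp: e_def)
    also have "\<dots> = lap_matrix m i j"
      using cs by (cases "i = q") (simp_all add: sum_subtractf)
    finally show "(\<Sum>k\<in>UNIV. \<Sum>l\<in>UNIV. lap_matrix m i k * L k l * lap_matrix m l j) = lap_matrix m i j" .
  qed
  thus ?thesis by blast
qed

lemma energy_eq:
  assumes mg: "multigraph m" and cn: "connected_mg m"
    and g: "\<And>i. mvq m g i = of_int (shift_q q X i)"
  shows "energy_q m q X = (\<Sum>i\<in>UNIV. g i * mvq m g i)"
proof -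
  define L where "L = (SOME L. gen_inverse (lap_matrix m) L)"
  have L: "gen_inverse (lap_matrix m) L"
    unfolding L_def by (rule someI_ex[OF gen_inverse_exists[OF mg cn]])
  have "energy_q m q X = (\<Sum>i\<in>UNIV. \<Sum>j\<in>UNIV. mvq m g i * L i j * mvq m g j)"
    by (simp add: energy_q_def pairing_q_def energy_pairing_def Let_def L_def[symmetric] g)
  also have "\<dots> = (\<Sum>i\<in>UNIV. g i * mvq m g i)" by (rule bilinear[OF mg L])
  finally show ?thesis .
qed


lemma lap_of_int:
  assumes "multigraph m"
  shows "of_int (laplacian m f v) = mvq m (\<lambda>i. of_int (f i)) v"
  by (simp add: mvq_alt[OF assms] laplacian_def)

lemma deg_lap:
  assumes "multigraph m"
  shows "(\<Sum>v\<in>UNIV. laplacian m f v) = 0"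
proof -
  have "(of_int (\<Sum>v\<in>UNIV. laplacian m f v) :: rat) = (\<Sum>v\<in>UNIV. mvq m (\<lambda>i. of_int (f i)) v)"
    by (simp add: lap_of_int[OF assms])
  also have "\<dots> = 0" by (rule mvq_sum0[OF assms])
  finally have "(of_int (\<Sum>v\<in>UNIV. laplacian m f v) :: rat) = 0" .
  thus ?thesis by (simp only: of_int_eq_0_iff)
qed

lemma lap_neg: "laplacian m (\<lambda>v. - f v) v = - laplacian m f v"
  by (simp add: laplacian_def sum_negf[symmetric] algebra_simps)

lemma lap_add: "laplacian m (\<lambda>v. f v + g v) v = laplacian m f v + laplacian m g v"
  by (simp add: laplacian_def sum.distrib[symmetric] algebra_simps)

lemma shift_sum0: "(\<Sum>i\<in>UNIV. shift_q q X i) = 0"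
  by (simp add: shift_q_def sum_subtractf deg_def)

lemma shift_g_exists:
  assumes mg: "multigraph m" and cn: "connected_mg m"
  shows "\<exists>g. \<forall>i. mvq m g i = of_int (shift_q q X i)"
proof -
  have "(\<Sum>i\<in>UNIV. (of_int (shift_q q X i) :: rat)) = 0"
    using shift_sum0[of q X] by (metis of_int_0 of_int_sum)
  from mvq_surj[OF mg cn this] show ?thesis by metis
qed

lemma energy_nonneg:
  assumes mg: "multigraph m" and cn: "connected_mg m"
  shows "0 \<le> energy_q m q X"
proof -
  obtain g where g: "\<And>i. mvq m g i = of_int (shift_q q X i)" using shift_g_exists[OF mg cn] by blast
  show ?thesis using energy_eq[OF mg cn g] mvq_nonneg[OF mg] by simp
qed

lemma sum_outdeg: "(\<Sum>w\<in>UNIV. if w \<in> A then 0 else int (m v w)) = int (outdeg m A v)"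
proof -
  have "(\<Sum>w\<in>UNIV. if w \<in> A then 0 else int (m v w)) = (\<Sum>w\<in>UNIV. if w \<in> UNIV - A then int (m v w) else 0)"
    by (intro sum.cong) auto
  also have "\<dots> = (\<Sum>w\<in>UNIV \<inter> (UNIV - A). int (m v w))"
    by (rule sum.inter_restrict[symmetric]) simp
  also have "\<dots> = int (outdeg m A v)" by (simp add: outdeg_def)
  finally show ?thesis .
qed

lemma edge_out:
  assumes cn: "connected_mg m" and "a \<in> A" "q \<notin> A"
  shows "\<exists>v\<in>A. \<exists>w. w \<notin> A \<and> 0 < m v w"
proof -
  have "(a, q) \<in> {(a, b). 0 < m a b}\<^sup>*" using cn by (simp add: connected_mg_def)
  moreover have "\<And>y. (a, y) \<in> {(a, b). 0 < m a b}\<^sup>* \<Longrightarrow> y \<notin> A \<Longrightarrow> \<exists>v\<in>A. \<exists>w. w \<notin> A \<and> 0 < m v w"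
  proof -
    fix y assume "(a, y) \<in> {(a, b). 0 < m a b}\<^sup>*" "y \<notin> A"
    thus "\<exists>v\<in>A. \<exists>w. w \<notin> A \<and> 0 < m v w"
    proof (induction rule: rtrancl_induct)
      case base thus ?case using assms by simp
    next
      case (step y z)
      show ?case
      proof (cases "y \<in> A")
        case True thus ?thesis using step by auto
      next
        case False thus ?thesis using step by auto
      qed
    qed
  qed
  ultimately show ?thesis using assms by blast
qed

lemma max_lemma:
  assumes mg: "multigraph m" and D0: "\<forall>v. v \<noteq> q \<longrightarrow> 0 \<le> D v"
    and red: "q_reduced m q D'" and eq: "\<forall>v. D' v = D v + laplacian m h v"
  shows "h v \<le> h q"
proof (rule ccontr)
  assume "\<not> h v \<le> h q"
  define M where "M = Max (range h)"
  have Mr: "M \<in> range h" unfolding M_def by (rule Max_in) auto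
  have Mge: "h w \<le> M" for w unfolding M_def by (rule Max_ge) auto
  define A where "A = {w. h w = M}"
  have Ane: "A \<noteq> {}" using Mr by (auto simp: A_def)
  have qA: "q \<notin> A" using \<open>\<not> h v \<le> h q\<close> Mge[of v] by (auto simp: A_def)
  then obtain u where uA: "u \<in> A" and lt: "D' u < int (outdeg m A u)"
    using red Ane unfolding q_reduced_def by blast
  have "int (outdeg m A u) = (\<Sum>w\<in>UNIV. if w \<in> A then 0 else int (m u w))"
    by (rule sum_outdeg[symmetric])
  also have "\<dots> \<le> (\<Sum>w\<in>UNIV. int (m u w) * (h u - h w))"
  proof (rule sum_mono)
    fix w :: 'a
    show "(if w \<in> A then 0 else int (m u w)) \<le> int (m u w) * (h u - h w)"
    proof (cases "w \<in> A")
      case True thus ?thesis using uA by (simp add: A_def)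
    next
      case False
      hence "1 \<le> h u - h w" using uA Mge[of w] by (auto simp: A_def)
      hence "int (m u w) * 1 \<le> int (m u w) * (h u - h w)" by (intro mult_left_mono) auto
      thus ?thesis using False by simp
    qed
  qed
  also have "\<dots> = laplacian m h u" by (simp add: laplacian_def)
  finally have "int (outdeg m A u) \<le> laplacian m h u" .
  moreover have "0 \<le> D u" using D0 uA qA by auto
  ultimately show False using lt eq by force
qed

lemma lap_const: "(\<And>v. f v = c) \<Longrightarrow> laplacian m f v = 0"
  by (simp add: laplacian_def)

lemma uniqueness:
  assumes mg: "multigraph m" and r1: "q_reduced m q D" and r2: "q_reduced m q D'"
    and le: "lin_equiv m D' D"
  shows "D' = D"
proof -
  obtain f where f: "(\<lambda>v. D' v - D v) = laplacian m f" using le by (auto simp: lin_equiv_def)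
  have e1: "\<forall>v. D' v = D v + laplacian m f v"
    using f by (metis (no_types, lifting) add.commute diff_add_cancel)
  have e2: "\<forall>v. D v = D' v + laplacian m (\<lambda>v. - f v) v"
    using e1 by (simp add: lap_neg)
  have D0: "\<forall>v. v \<noteq> q \<longrightarrow> 0 \<le> D v" and D0': "\<forall>v. v \<noteq> q \<longrightarrow> 0 \<le> D' v"
    using r1 r2 by (auto simp: q_reduced_def)
  have "f v \<le> f q" for v by (rule max_lemma[OF mg D0 r2 e1])
  moreover have "- f v \<le> - f q" for v by (rule max_lemma[OF mg D0' r1 e2])
  ultimately have "f v = f q" for v by (meson neg_le_iff_le order_antisym)
  hence "laplacian m f v = 0" for v by (intro lap_const) 
  thus ?thesis using e1 by auto
qed


lemma firing:
  assumes mg: "multigraph m" and cn: "connected_mg m"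
    and X0: "\<forall>v. v \<noteq> q \<longrightarrow> 0 \<le> X v" and Ane: "A \<noteq> {}" and qA: "q \<notin> A"
    and out: "\<forall>v\<in>A. int (outdeg m A v) \<le> X v"
  shows "\<exists>X'. (\<forall>v. v \<noteq> q \<longrightarrow> 0 \<le> X' v) \<and> lin_equiv m X' X \<and> energy_q m q X' \<le> energy_q m q X - 1"
proof -
  define chA :: "'a \<Rightarrow> int" where "chA v = (if v \<in> A then 1 else 0)" for v
  define X' where "X' v = X v - laplacian m chA v" for v
  have lin: "laplacian m chA v = int (outdeg m A v)" if "v \<in> A" for v
  proof -
    have "laplacian m chA v = (\<Sum>w\<in>UNIV. if w \<in> A then 0 else int (m v w))"
      unfolding laplacian_def using that by (intro sum.cong) (auto simp: chA_def)
    thus ?thesis by (simp add: sum_outdeg)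
  qed
  have lout: "laplacian m chA v \<le> 0" if "v \<notin> A" for v
    unfolding laplacian_def using that by (intro sum_nonpos) (auto simp: chA_def)
  have X'0: "\<forall>v. v \<noteq> q \<longrightarrow> 0 \<le> X' v"
  proof (intro allI impI)
    fix v assume "v \<noteq> q"
    show "0 \<le> X' v"
    proof (cases "v \<in> A")
      case True thus ?thesis using lin[OF True] out by (auto simp: X'_def)
    next
      case False thus ?thesis using lout[OF False] X0 \<open>v \<noteq> q\<close> by (auto simp: X'_def)
    qed
  qed
  have le: "lin_equiv m X' X"
    unfolding lin_equiv_def
    by (rule exI[of _ "\<lambda>v. - chA v"]) (simp add: X'_def lap_neg fun_eq_iff)
  obtain g where g: "\<And>i. mvq m g i = of_int (shift_q q X i)" using shift_g_exists[OF mg cn] by blast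
  define chr :: "'a \<Rightarrow> rat" where "chr i = of_int (chA i)" for i
  have chr_eq: "chr = (\<lambda>i. of_int (chA i))" by (simp add: fun_eq_iff chr_def)
  define g' where "g' i = g i - chr i" for i
  have mvd: "mvq m g' i = mvq m g i - mvq m chr i" for i
    by (simp add: mvq_def g'_def sum_subtractf right_diff_distrib)
  have degeq: "deg X' = deg X"
    using deg_lap[OF mg, of chA] by (simp add: deg_def X'_def sum_subtractf)
  have g': "mvq m g' i = of_int (shift_q q X' i)" for i
    using degeq by (simp add: mvd g shift_q_def X'_def lap_of_int[OF mg] chr_eq)
  have E: "energy_q m q X = (\<Sum>i\<in>UNIV. g i * mvq m g i)" by (rule energy_eq[OF mg cn g])
  have E': "energy_q m q X' = (\<Sum>i\<in>UNIV. g' i * mvq m g' i)" by (rule energy_eq[OF mg cn g'])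
  have sym: "(\<Sum>i\<in>UNIV. g i * mvq m chr i) = (\<Sum>i\<in>UNIV. chr i * mvq m g i)"
    using mvq_symm[OF mg, of g chr] by (simp add: mult.commute)
  have "(\<Sum>i\<in>UNIV. g' i * mvq m g' i) = (\<Sum>i\<in>UNIV. g i * mvq m g i) - (\<Sum>i\<in>UNIV. g i * mvq m chr i)
      - (\<Sum>i\<in>UNIV. chr i * mvq m g i) + (\<Sum>i\<in>UNIV. chr i * mvq m chr i)"
    by (simp add: g'_def mvd algebra_simps sum.distrib sum_subtractf)
  hence E2: "energy_q m q X' = energy_q m q X - 2 * (\<Sum>i\<in>UNIV. chr i * mvq m g i) + (\<Sum>i\<in>UNIV. chr i * mvq m chr i)"
    using E E' sym by simp
  have s1: "(\<Sum>i\<in>UNIV. chr i * mvq m g i) = of_int (\<Sum>i\<in>A. X i)"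
  proof -
    have "(\<Sum>i\<in>UNIV. chr i * mvq m g i) = (\<Sum>i\<in>UNIV. if i \<in> A then of_int (X i) else 0)"
      using qA by (intro sum.cong) (auto simp: chr_def chA_def g shift_q_def)
    also have "\<dots> = (\<Sum>i\<in>UNIV \<inter> A. of_int (X i))" by (rule sum.inter_restrict[symmetric]) simp
    finally show ?thesis by simp
  qed
  have s2: "(\<Sum>i\<in>UNIV. chr i * mvq m chr i) = of_int (\<Sum>i\<in>A. int (outdeg m A i))"
  proof -
    have "(\<Sum>i\<in>UNIV. chr i * mvq m chr i) = (\<Sum>i\<in>UNIV. if i \<in> A then of_int (int (outdeg m A i)) else 0)"
    proof (intro sum.cong refl)
      fix i
      have mi: "mvq m chr i = of_int (laplacian m chA i)" by (simp add: chr_eq lap_of_int[OF mg])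
      show "chr i * mvq m chr i = (if i \<in> A then of_int (int (outdeg m A i)) else 0)"
        by (cases "i \<in> A") (simp_all only: mi lin, simp_all add: chr_def chA_def)
    qed
    also have "\<dots> = (\<Sum>i\<in>UNIV \<inter> A. of_int (int (outdeg m A i)))" by (rule sum.inter_restrict[symmetric]) simp
    finally show ?thesis by (simp del: of_int_of_nat_eq)
  qed
  obtain a where aA: "a \<in> A" using Ane by blast
  obtain v w where vA: "v \<in> A" and wA: "w \<notin> A" and mvw: "0 < m v w"
    using edge_out[OF cn aA qA] by blast
  have "m v w \<le> outdeg m A v"
    unfolding outdeg_def by (rule member_le_sum) (use wA in auto)
  hence ov: "1 \<le> int (outdeg m A v)" using mvw by linarith
  have "1 \<le> 2 * X v - int (outdeg m A v)" using ov out vA by force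
  also have "\<dots> \<le> (\<Sum>i\<in>A. 2 * X i - int (outdeg m A i))"
    by (rule member_le_sum) (use vA out in force)+
  finally have "1 \<le> 2 * (\<Sum>i\<in>A. X i) - (\<Sum>i\<in>A. int (outdeg m A i))"
    by (simp add: sum_subtractf sum_distrib_left)
  hence "(1::rat) \<le> of_int (2 * (\<Sum>i\<in>A. X i) - (\<Sum>i\<in>A. int (outdeg m A i)))"
    by (simp only: of_int_le_iff[symmetric] of_int_1)
  hence "energy_q m q X' \<le> energy_q m q X - 1"
    using E2 s1 s2 by (simp del: of_int_of_nat_eq)
  thus ?thesis using X'0 le by blast
qed


lemma lin_trans: "lin_equiv m X Y \<Longrightarrow> lin_equiv m Y Z \<Longrightarrow> lin_equiv m X Z"
proof -
  assume "lin_equiv m X Y" "lin_equiv m Y Z"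
  then obtain f g where f: "(\<lambda>v. X v - Y v) = laplacian m f" and g: "(\<lambda>v. Y v - Z v) = laplacian m g"
    by (auto simp: lin_equiv_def)
  have "(\<lambda>v. X v - Z v) = laplacian m (\<lambda>v. f v + g v)"
  proof
    fix v
    have "X v - Y v = laplacian m f v" "Y v - Z v = laplacian m g v"
      using fun_cong[OF f, of v] fun_cong[OF g, of v] by auto
    thus "X v - Z v = laplacian m (\<lambda>v. f v + g v) v" by (simp add: lap_add)
  qed
  thus ?thesis by (auto simp: lin_equiv_def)
qed

lemma lin_refl: "lin_equiv m X X"
  unfolding lin_equiv_def by (rule exI[of _ "\<lambda>_. 0"]) (simp add: fun_eq_iff lap_const)

theorem mainTheorem8:
  fixes m :: "'v::finite \<Rightarrow> 'v \<Rightarrow> nat" and q :: 'v and D :: "'v divisor"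
  assumes "multigraph m" and "connected_mg m"
  shows "q_reduced m q D \<longleftrightarrow>
    (D \<in> lin_system_q m q D \<and>
     (\<forall>D'\<in>lin_system_q m q D. D' \<noteq> D \<longrightarrow> energy_q m q D < energy_q m q D'))"
proof
  note mg = assms(1) and cn = assms(2)
  assume red: "q_reduced m q D"
  have Din: "D \<in> lin_system_q m q D"
    using red by (simp add: lin_system_q_def lin_refl q_reduced_def)
  have claim: "\<forall>X. nat \<lfloor>energy_q m q X\<rfloor> = n \<longrightarrow> X \<in> lin_system_q m q D \<longrightarrow>
      X = D \<or> energy_q m q D < energy_q m q X" for n
  proof (induction n rule: less_induct)
    case (less n)
    show ?case
    proof (intro allI impI)
      fix X assume n: "nat \<lfloor>energy_q m q X\<rfloor> = n" and X: "X \<in> lin_system_q m q D"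
      have X0: "\<forall>v. v \<noteq> q \<longrightarrow> 0 \<le> X v" and XD: "lin_equiv m X D"
        using X by (auto simp: lin_system_q_def)
      show "X = D \<or> energy_q m q D < energy_q m q X"
      proof (cases "q_reduced m q X")
        case True thus ?thesis using uniqueness[OF mg red True XD] by blast
      next
        case False
        then obtain A where Ane: "A \<noteq> {}" and As: "A \<subseteq> UNIV - {q}"
          and out: "\<forall>v\<in>A. int (outdeg m A v) \<le> X v"
          using X0 unfolding q_reduced_def by (meson not_less)
        have qA: "q \<notin> A" using As by blast
        obtain X' where X'0: "\<forall>v. v \<noteq> q \<longrightarrow> 0 \<le> X' v" and le: "lin_equiv m X' X"
          and E: "energy_q m q X' \<le> energy_q m q X - 1"
          using firing[OF mg cn X0 Ane qA out] by blast
        have X'in: "X' \<in> lin_system_q m q D"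
          using X'0 lin_trans[OF le XD] by (simp add: lin_system_q_def)
        have nn: "0 \<le> energy_q m q X'" by (rule energy_nonneg[OF mg cn])
        have "\<lfloor>energy_q m q X'\<rfloor> \<le> \<lfloor>energy_q m q X - 1\<rfloor>" using E by (rule floor_mono)
        hence fl: "\<lfloor>energy_q m q X'\<rfloor> \<le> \<lfloor>energy_q m q X\<rfloor> - 1" by simp
        have "0 \<le> \<lfloor>energy_q m q X'\<rfloor>" using nn by simp
        hence "nat \<lfloor>energy_q m q X'\<rfloor> < n" using fl n by linarith
        hence "X' = D \<or> energy_q m q D < energy_q m q X'" using less.IH X'in by blast
        hence "energy_q m q D \<le> energy_q m q X'" by auto
        thus ?thesis using E by simp
      qed
    qed
  qed
  show "D \<in> lin_system_q m q D \<and>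
     (\<forall>D'\<in>lin_system_q m q D. D' \<noteq> D \<longrightarrow> energy_q m q D < energy_q m q D')"
    using Din claim by blast
next
  note mg = assms(1) and cn = assms(2)
  assume H: "D \<in> lin_system_q m q D \<and>
     (\<forall>D'\<in>lin_system_q m q D. D' \<noteq> D \<longrightarrow> energy_q m q D < energy_q m q D')"
  have D0: "\<forall>v. v \<noteq> q \<longrightarrow> 0 \<le> D v" using H by (simp add: lin_system_q_def)
  show "q_reduced m q D"
    unfolding q_reduced_def
  proof (intro conjI)
    show "\<forall>v. v \<noteq> q \<longrightarrow> 0 \<le> D v" by (rule D0)
  next
    show "\<forall>A. A \<noteq> {} \<and> A \<subseteq> UNIV - {q} \<longrightarrow> (\<exists>v\<in>A. D v < int (outdeg m A v))"
    proof (intro allI impI)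
    fix A :: "'v set" assume A: "A \<noteq> {} \<and> A \<subseteq> UNIV - {q}"
    show "\<exists>v\<in>A. D v < int (outdeg m A v)"
    proof (rule ccontr)
      assume "\<not> (\<exists>v\<in>A. D v < int (outdeg m A v))"
      hence out: "\<forall>v\<in>A. int (outdeg m A v) \<le> D v" by (meson not_less)
      have qA: "q \<notin> A" using A by blast
      obtain X' where X'0: "\<forall>v. v \<noteq> q \<longrightarrow> 0 \<le> X' v" and le: "lin_equiv m X' D"
        and E: "energy_q m q X' \<le> energy_q m q D - 1"
        using firing[OF mg cn D0 _ qA out] A by blast
      have X'in: "X' \<in> lin_system_q m q D" using X'0 le by (simp add: lin_system_q_def)
      have "X' \<noteq> D" using E by auto
      hence "energy_q m q D < energy_q m q X'" using H X'in by blast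
      thus False using E by simp
    qed
    qed
  qed
qed

end
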